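(* Let $\theta^*\in\mathbb{R}^n$, $\sigma>0$, $Y\sim N(\theta^*,\sigma^2I_n)$, and $\hat\theta(Y)=\Pi_{\mathcal{C}}(Y)$ for a nonempty closed convex set $\mathcal{C}$. (1) If $\mathcal{C}=\mathbb{R}^n_+=\{u:u_i\ge0\ \forall i\}$, then $\lim_{\sigma\to\infty}\sigma^{-2}M(\hat\theta,\theta^* )=\lim_{\sigma\to\infty}\sigma^{-2}E(\hat\theta,\theta^* )=n/2$. (2) For a general nonempty closed convex $\mathcal{C}$, $K_{\mathcal{C}}=\{0\}$ if and only if $\mathcal{C}$ is bounded, and in that case $\lim_{\sigma\to\infty}\sigma^{-2}M(\hat\theta,\theta^* )=\lim_{\sigma\to\infty}\sigma^{-2}E(\hat\theta,\theta^* )=0$.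
   Context: $\Pi_{\mathcal{C}}$ is Euclidean projection; $T_{\mathcal{C}}(\theta_0)=\mathrm{cl}\{\alpha(\theta-\theta_0):\alpha\ge0,\theta\in\mathcal{C}\}$ is the tangent cone and $K_{\mathcal{C}}=\bigcap_{\theta\in\mathcal{C}}T_{\mathcal{C}}(\theta)$ is the core cone. Misspecified risk: $M(\hat\theta,\theta^* )=\mathbb{E}\|\hat\theta(Y)-\Pi_{\mathcal{C}}(\theta^* )\|^2$; excess risk: $E(\hat\theta,\theta^* )=\mathbb{E}\|\hat\theta(Y)-\theta^*\|^2-\|\Pi_{\mathcal{C}}(\theta^* )-\theta^*\|^2$. *)

theory Defs
  imports "HOL-Analysis.Analysis"
begin

abbreviation proj :: "(real ^ 'n) set \<Rightarrow> real ^ 'n \<Rightarrow> real ^ 'n" where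
  "proj C y \<equiv> closest_point C y"

definition tangent_cone :: "(real ^ 'n) set \<Rightarrow> real ^ 'n \<Rightarrow> (real ^ 'n) set" where
  "tangent_cone C \<theta>0 = closure {\<alpha> *\<^sub>R (\<theta> - \<theta>0) | \<alpha> \<theta>. \<alpha> \<ge> 0 \<and> \<theta> \<in> C}"

definition core_cone :: "(real ^ 'n) set \<Rightarrow> (real ^ 'n) set" where
  "core_cone C = (\<Inter>\<theta>\<in>C. tangent_cone C \<theta>)"

definition std_gauss_density :: "real ^ 'n \<Rightarrow> real" where
  "std_gauss_density z = (2 * pi) powr (- real CARD('n) / 2) * exp (- (norm z)\<^sup>2 / 2)"

text \<open>E f(Y) for Y ~ N(theta, sigma^2 I_n), written as Y = theta + sigma Z, Z ~ N(0, I_n).\<close>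
definition gauss_expect :: "real ^ 'n \<Rightarrow> real \<Rightarrow> (real ^ 'n \<Rightarrow> real) \<Rightarrow> real" where
  "gauss_expect \<theta> \<sigma> f = (\<integral>z. f (\<theta> + \<sigma> *\<^sub>R z) * std_gauss_density z \<partial>lborel)"

definition misspec_risk :: "(real ^ 'n) set \<Rightarrow> real ^ 'n \<Rightarrow> real \<Rightarrow> real" where
  "misspec_risk C \<theta>s \<sigma> = gauss_expect \<theta>s \<sigma> (\<lambda>y. (norm (proj C y - proj C \<theta>s))\<^sup>2)"

definition excess_risk :: "(real ^ 'n) set \<Rightarrow> real ^ 'n \<Rightarrow> real \<Rightarrow> real" where
  "excess_risk C \<theta>s \<sigma> = gauss_expect \<theta>s \<sigma> (\<lambda>y. (norm (proj C y - \<theta>s))\<^sup>2)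
      - (norm (proj C \<theta>s - \<theta>s))\<^sup>2"

definition nonneg_orthant :: "(real ^ 'n) set" where
  "nonneg_orthant = {u. \<forall>i. u $ i \<ge> 0}"

end

theory Submission
  imports Defs "HOL-Probability.Distributions"
begin

lemma gauss_prod: "std_gauss_density (z::real^'n) = (\<Prod>b\<in>Basis. std_normal_density (z \<bullet> b))"
proof -
  have n: "(norm z)\<^sup>2 = (\<Sum>b\<in>Basis. (z \<bullet> b)\<^sup>2)"
    unfolding power2_norm_eq_inner by (subst euclidean_inner) (simp add: power2_eq_square)
  have "(\<Prod>b\<in>Basis. std_normal_density (z \<bullet> b)) = (1 / sqrt (2*pi)) ^ CARD('n) * exp (\<Sum>b\<in>Basis. - (z \<bullet> b)\<^sup>2 / 2)"
    unfolding std_normal_density_def prod.distrib prod_constant by (simp add: exp_sum)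
  also have "(\<Sum>b\<in>Basis. - (z \<bullet> b)\<^sup>2 / 2) = - (norm z)\<^sup>2 / 2"
    by (simp add: n sum_negf sum_divide_distrib)
  also have "(1 / sqrt (2*pi)) ^ CARD('n) = (2 * pi) powr (- real CARD('n) / 2)"
  proof -
    have "(1 / sqrt (2*pi)) ^ CARD('n) = ((2*pi) powr (-1/2)) ^ CARD('n)"
      by (simp add: powr_half_sqrt[symmetric] powr_minus_divide)
    also have "\<dots> = (2 * pi) powr (- real CARD('n) / 2)"
      by (subst powr_realpow[symmetric]) (simp_all add: powr_powr)
    finally show ?thesis .
  qed
  finally show ?thesis by (simp add: std_gauss_density_def)
qed

lemma std_gauss_density_measurable[measurable]: "std_gauss_density \<in> borel_measurable borel"
  unfolding std_gauss_density_def[abs_def] by measurable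

lemma std_gauss_density_nonneg: "0 \<le> std_gauss_density z"
  unfolding std_gauss_density_def by simp

lemma gauss_coord_integral:
  fixes b0 :: "real^'n" and h :: "real \<Rightarrow> real" and I :: real
  assumes b0: "b0 \<in> Basis" and hm[measurable]: "h \<in> borel_measurable borel" and hnn: "\<And>t. 0 \<le> h t"
    and hI: "has_bochner_integral lborel (\<lambda>t. std_normal_density t * h t) I"
  shows "has_bochner_integral lborel (\<lambda>z::real^'n. h (z \<bullet> b0) * std_gauss_density z) I"
proof -
  define f where "f b = (if b = b0 then (\<lambda>t. std_normal_density t * h t) else std_normal_density)" for b :: "real^'n"
  have fnn: "0 \<le> f b t" for b t using hnn by (simp add: f_def)
  have fm[measurable]: "f b \<in> borel_measurable borel" for b by (simp add: f_def)
  have fin: "finite (Basis :: (real^'n) set)" by simp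
  have eq: "h (z \<bullet> b0) * std_gauss_density z = (\<Prod>b\<in>Basis. f b (z \<bullet> b))" for z :: "real^'n"
  proof -
    have "(\<Prod>b\<in>Basis. f b (z \<bullet> b)) = f b0 (z \<bullet> b0) * (\<Prod>b\<in>Basis - {b0}. f b (z \<bullet> b))"
      using prod.remove[OF fin b0] by simp
    also have "(\<Prod>b\<in>Basis - {b0}. f b (z \<bullet> b)) = (\<Prod>b\<in>Basis - {b0}. std_normal_density (z \<bullet> b))"
      by (intro prod.cong) (auto simp: f_def)
    finally show ?thesis
      unfolding gauss_prod using prod.remove[OF fin b0, of "\<lambda>b. std_normal_density (z \<bullet> b)"]
      by (simp add: f_def)
  qed
  have hint: "integrable lborel (\<lambda>t. std_normal_density t * h t)" using hI by (auto simp: has_bochner_integral_iff)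
  have I: "integral\<^sup>L lborel (\<lambda>t. std_normal_density t * h t) = I" using hI by (auto simp: has_bochner_integral_iff)
  have I0: "0 \<le> I" unfolding I[symmetric] by (rule integral_nonneg_AE) (simp add: hnn)
  define J where "J b = (if b = b0 then I else 1)" for b :: "real^'n"
  have Jb: "(\<integral>\<^sup>+t. ennreal (f b t) \<partial>lborel) = ennreal (J b)" for b
  proof (cases "b = b0")
    case True then show ?thesis
      using nn_integral_eq_integral[OF hint] hnn I by (simp add: f_def J_def)
  next
    have "(\<integral>\<^sup>+t. ennreal (normal_density 0 1 t) \<partial>lborel) = ennreal (integral\<^sup>L lborel (normal_density 0 1))"
      by (rule nn_integral_eq_integral[OF integrable_normal_density]) (auto intro!: AE_I2 normal_density_nonneg)
    then have "(\<integral>\<^sup>+t. ennreal (normal_density 0 1 t) \<partial>lborel) = 1" by simp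
    moreover case False
    ultimately show ?thesis by (simp add: f_def J_def)
  qed
  have "(\<integral>\<^sup>+z. ennreal (h (z \<bullet> b0) * std_gauss_density z) \<partial>lborel)
      = (\<integral>\<^sup>+z. (\<Prod>b\<in>Basis. ennreal (f b (z \<bullet> b))) \<partial>lborel)"
    unfolding eq by (simp add: prod_ennreal fnn)
  also have "\<dots> = (\<Prod>b\<in>Basis. (\<integral>\<^sup>+t. ennreal (f b t) \<partial>lborel))"
    by (rule nn_integral_lborel_prod) auto
  also have "\<dots> = ennreal (\<Prod>b\<in>Basis. J b)"
    by (simp add: Jb prod_ennreal J_def I0)
  also have "(\<Prod>b\<in>Basis. J b) = I"
    using prod.remove[OF fin b0, of J] by (simp add: J_def)
  finally have nn: "(\<integral>\<^sup>+z. ennreal (h (z \<bullet> b0) * std_gauss_density z) \<partial>lborel) = ennreal I" .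
  show ?thesis
    by (rule has_bochner_integral_nn_integral[OF _ _ I0 nn]) (auto simp: hnn std_gauss_density_nonneg)
qed

lemma half_moment: "has_bochner_integral lborel (\<lambda>t. std_normal_density t * (max t 0)\<^sup>2) (1/2)"
proof -
  let ?g = "\<lambda>t::real. std_normal_density t * (max t 0)\<^sup>2"
  let ?g' = "\<lambda>t::real. std_normal_density t * (max (-t) 0)\<^sup>2"
  have sq: "integrable lborel (\<lambda>t. std_normal_density t * t^2)"
    by (rule integrable_std_normal_moment)
  have sqv: "integral\<^sup>L lborel (\<lambda>t. std_normal_density t * t^2) = 1"
    using integral_std_normal_moment_even[of 1] by simp
  have pn: "0 \<le> std_normal_density t" for t by (rule normal_density_nonneg)
  have bnd: "?g t \<le> std_normal_density t * t^2" for t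
  proof -
    have "(max t 0)^2 \<le> t^2" by (cases "t \<ge> 0") (auto simp: max_def)
    then show ?thesis using pn[of t] by (simp add: mult_left_mono)
  qed
  have bnd': "?g' t \<le> std_normal_density t * t^2" for t
  proof -
    have "(max (-t) 0)^2 \<le> t^2" by (cases "t \<ge> 0") (auto simp: max_def)
    then show ?thesis using pn[of t] by (simp add: mult_left_mono)
  qed
  have ig: "integrable lborel ?g"
    by (rule Bochner_Integration.integrable_bound[OF sq]) (auto intro!: AE_I2 simp: abs_of_nonneg pn bnd)
  have ig': "integrable lborel ?g'"
    by (rule Bochner_Integration.integrable_bound[OF sq]) (auto intro!: AE_I2 simp: abs_of_nonneg pn bnd')
  have sym: "integral\<^sup>L lborel ?g = integral\<^sup>L lborel ?g'"
    using lborel_integral_real_affine[of "-1" ?g 0] by (simp add: std_normal_density_def)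
  have sum: "?g t + ?g' t = std_normal_density t * t^2" for t
    by (cases "t \<ge> 0") (auto simp: algebra_simps max_def)
  have "integral\<^sup>L lborel ?g + integral\<^sup>L lborel ?g' = 1"
    using Bochner_Integration.integral_add[OF ig ig', symmetric] sum sqv by simp
  then have "integral\<^sup>L lborel ?g = 1/2" using sym by simp
  then show ?thesis using ig by (simp add: has_bochner_integral_iff)
qed

lemma gauss_total: "has_bochner_integral lborel (std_gauss_density :: real^'n \<Rightarrow> real) 1"
proof -
  have b: "(SOME b. b \<in> (Basis :: (real^'n) set)) \<in> Basis" by (rule someI_ex) (use SOME_Basis in blast)
  have "has_bochner_integral lborel (\<lambda>t. std_normal_density t * 1) 1"
    using integrable_normal_density[of 0 1] integral_normal_density[of 0 1] by (simp add: has_bochner_integral_iff)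
  from gauss_coord_integral[OF b _ _ this] show ?thesis by simp
qed

lemma gauss_abs_coord:
  assumes "b \<in> (Basis :: (real^'n) set)"
  shows "integrable lborel (\<lambda>z::real^'n. \<bar>z \<bullet> b\<bar> * std_gauss_density z)"
proof -
  have "has_bochner_integral lborel (\<lambda>t. std_normal_density t * \<bar>t\<bar>) (sqrt (2/pi))"
    using std_normal_moment_abs_odd[of 0] by simp
  from gauss_coord_integral[OF assms _ _ this] show ?thesis by (auto simp: has_bochner_integral_iff)
qed

lemma gauss_norm_integrable: "integrable lborel (\<lambda>z::real^'n. norm z * std_gauss_density z)"
proof (rule Bochner_Integration.integrable_bound)
  show "integrable lborel (\<lambda>z::real^'n. \<Sum>b\<in>Basis. \<bar>z \<bullet> b\<bar> * std_gauss_density z)"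
    by (auto intro!: integrable_sum gauss_abs_coord)
  show "AE z in lborel. norm (norm z * std_gauss_density z) \<le> norm (\<Sum>b\<in>Basis. \<bar>z \<bullet> b\<bar> * std_gauss_density (z::real^'n))"
  proof (intro AE_I2)
    fix z :: "real^'n"
    have "norm z * std_gauss_density z \<le> (\<Sum>b\<in>Basis. \<bar>z \<bullet> b\<bar>) * std_gauss_density z"
      by (intro mult_right_mono norm_le_l1 std_gauss_density_nonneg)
    then show "norm (norm z * std_gauss_density z) \<le> norm (\<Sum>b\<in>Basis. \<bar>z \<bullet> b\<bar> * std_gauss_density (z::real^'n))"
      by (simp add: sum_distrib_right[symmetric] std_gauss_density_nonneg abs_mult)
  qed
qed simp

lemma gauss_halfsq:
  assumes "b \<in> (Basis :: (real^'n) set)"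
  shows "has_bochner_integral lborel (\<lambda>z::real^'n. (max (z \<bullet> b) 0)\<^sup>2 * std_gauss_density z) (1/2)"
  using gauss_coord_integral[OF assms _ _ half_moment] by simp

definition oproj :: "real^'n \<Rightarrow> real^'n" where
  "oproj z = (\<Sum>b\<in>Basis. max (z \<bullet> b) 0 *\<^sub>R b)"

lemma oproj_inner: "b \<in> Basis \<Longrightarrow> oproj z \<bullet> b = max (z \<bullet> b) 0"
  unfolding oproj_def by (simp add: inner_sum_left inner_Basis if_distrib cong: if_cong)

lemma orthant_Basis: "nonneg_orthant = {u::real^'n. \<forall>b\<in>Basis. 0 \<le> u \<bullet> b}"
proof -
  have "(\<forall>i. 0 \<le> u $ i) \<longleftrightarrow> (\<forall>b\<in>Basis. 0 \<le> u \<bullet> b)" for u :: "real^'n"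
  proof
    assume "\<forall>i. 0 \<le> u $ i" then show "\<forall>b\<in>Basis. 0 \<le> u \<bullet> b"
      by (auto simp: Basis_vec_def inner_axis)
  next
    assume h: "\<forall>b\<in>Basis. 0 \<le> u \<bullet> b"
    show "\<forall>i. 0 \<le> u $ i"
    proof
      fix i :: 'n
      have "(axis i (1::real) :: real^'n) \<in> Basis" by (auto simp: Basis_vec_def)
      with h have "0 \<le> u \<bullet> axis i (1::real)" by blast
      then show "0 \<le> u $ i" by (simp add: inner_axis)
    qed
  qed
  then show ?thesis unfolding nonneg_orthant_def by blast
qed

lemma orthant_closed: "closed (nonneg_orthant :: (real^'n) set)"
proof -
  have eq: "nonneg_orthant = (\<Inter>b\<in>Basis. {u::real^'n. 0 \<le> u \<bullet> b})" by (auto simp: orthant_Basis)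
  have cl: "closed {u::real^'n. 0 \<le> u \<bullet> b}" for b
    using closed_halfspace_ge[of 0 b] by (simp add: inner_commute)
  show ?thesis unfolding eq by (intro closed_INT ballI cl)
qed

lemma orthant_convex: "convex (nonneg_orthant :: (real^'n) set)"
  unfolding orthant_Basis convex_def by (auto simp: inner_add_left)

lemma orthant_nonempty: "(0::real^'n) \<in> nonneg_orthant"
  by (simp add: orthant_Basis)

lemma norm2_Basis: "(norm (x::'a::euclidean_space))\<^sup>2 = (\<Sum>b\<in>Basis. (x \<bullet> b)\<^sup>2)"
  unfolding power2_norm_eq_inner by (subst euclidean_inner) (simp add: power2_eq_square)

lemma oproj_eq: "closest_point nonneg_orthant z = oproj (z::real^'n)"
proof (rule closest_point_unique[symmetric, OF orthant_convex orthant_closed])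
  show "oproj z \<in> nonneg_orthant" by (simp add: orthant_Basis oproj_inner)
  show "\<forall>y\<in>nonneg_orthant. dist z (oproj z) \<le> dist z y"
  proof
    fix y :: "real^'n" assume y: "y \<in> nonneg_orthant"
    have "(norm (z - oproj z))\<^sup>2 \<le> (norm (z - y))\<^sup>2"
      unfolding norm2_Basis
    proof (rule sum_mono)
      fix b :: "real^'n" assume b: "b \<in> Basis"
      then have "0 \<le> y \<bullet> b" using y by (simp add: orthant_Basis)
      then have yb: "0 \<le> y \<bullet> b" .
      show "((z - oproj z) \<bullet> b)\<^sup>2 \<le> ((z - y) \<bullet> b)\<^sup>2"
      proof (cases "z \<bullet> b \<ge> 0")
        case True then show ?thesis using b by (simp add: inner_diff_left oproj_inner)
      next
        case False
        have e: "(z \<bullet> b - y \<bullet> b)\<^sup>2 = (z \<bullet> b)\<^sup>2 + ((y \<bullet> b)\<^sup>2 - 2*(z \<bullet> b)*(y \<bullet> b))"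
          by (simp add: power2_diff)
        have "(z \<bullet> b)*(y \<bullet> b) \<le> 0" using False yb by (simp add: mult_nonpos_nonneg)
        then have "0 \<le> (y \<bullet> b)\<^sup>2 - 2*(z \<bullet> b)*(y \<bullet> b)" using zero_le_power2[of "y \<bullet> b"] by linarith
        then show ?thesis using b False by (simp add: inner_diff_left oproj_inner e)
      qed
    qed
    then show "dist z (oproj z) \<le> dist z y"
      by (simp add: dist_norm power2_le_iff_abs_le)
  qed
qed

lemma oproj_scale: "0 < s \<Longrightarrow> oproj (s *\<^sub>R z) = s *\<^sub>R oproj (z::real^'n)"
  unfolding oproj_def scaleR_sum_right by (intro sum.cong refl) (simp add: max_mult_distrib_left)

lemma oproj_lip: "norm (oproj x - oproj (y::real^'n)) \<le> norm (x - y)"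
  using closest_point_lipschitz[OF orthant_convex orthant_closed, of x y] orthant_nonempty
  by (auto simp: oproj_eq dist_norm)

lemma oproj_0: "oproj 0 = (0::real^'n)"
  by (simp add: oproj_def)

lemma oproj_norm2: "(norm (oproj z))\<^sup>2 = (\<Sum>b\<in>Basis. (max (z \<bullet> b) 0)\<^sup>2)"
  by (simp add: norm2_Basis oproj_inner)

lemma gauss_oproj: "has_bochner_integral lborel (\<lambda>z::real^'n. (norm (oproj z))\<^sup>2 * std_gauss_density z) (real CARD('n) / 2)"
proof -
  have "has_bochner_integral lborel (\<lambda>z::real^'n. \<Sum>b\<in>Basis. (max (z \<bullet> b) 0)\<^sup>2 * std_gauss_density z) (\<Sum>b\<in>(Basis::(real^'n) set). 1/2)"
    by (intro has_bochner_integral_sum gauss_halfsq)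
  then show ?thesis by (simp add: oproj_norm2 sum_distrib_right)
qed

lemma gauss_limit:
  fixes f :: "real \<Rightarrow> real^'n \<Rightarrow> real" and g w :: "real^'n \<Rightarrow> real" and e :: "real \<Rightarrow> real"
  assumes fm: "\<And>s. f s \<in> borel_measurable borel"
    and bnd: "\<forall>\<^sub>F s in at_top. 0 \<le> e s \<and> (\<forall>z. \<bar>f s z - g z\<bar> \<le> e s * w z)"
    and e0: "(e \<longlongrightarrow> 0) at_top"
    and wi: "integrable lborel (\<lambda>z. w z * std_gauss_density z)"
    and gi: "integrable lborel (\<lambda>z. g z * std_gauss_density z)"
  shows "((\<lambda>s. \<integral>z. f s z * std_gauss_density z \<partial>lborel) \<longlongrightarrow> (\<integral>z. g z * std_gauss_density z \<partial>lborel)) at_top"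
proof -
  let ?c = "\<integral>z. w z * std_gauss_density z \<partial>lborel"
  have ev: "\<forall>\<^sub>F s in at_top. norm ((\<integral>z. f s z * std_gauss_density z \<partial>lborel) - (\<integral>z. g z * std_gauss_density z \<partial>lborel)) \<le> e s * ?c"
    using bnd
  proof eventually_elim
    case (elim s)
    then have es: "0 \<le> e s" and b: "\<And>z. \<bar>f s z - g z\<bar> \<le> e s * w z" by auto
    have ewi: "integrable lborel (\<lambda>z. e s * (w z * std_gauss_density z))"
      using wi by simp
    have pw: "\<bar>f s z * std_gauss_density z - g z * std_gauss_density z\<bar> \<le> e s * (w z * std_gauss_density z)" for z
    proof -
      have "\<bar>f s z * std_gauss_density z - g z * std_gauss_density z\<bar> = \<bar>f s z - g z\<bar> * std_gauss_density z"
        by (simp add: left_diff_distrib[symmetric] abs_mult std_gauss_density_nonneg)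
      also have "\<dots> \<le> e s * w z * std_gauss_density z"
        by (intro mult_right_mono b std_gauss_density_nonneg)
      finally show ?thesis by simp
    qed
    have fi: "integrable lborel (\<lambda>z. f s z * std_gauss_density z)"
    proof (rule Bochner_Integration.integrable_bound)
      show "integrable lborel (\<lambda>z. \<bar>g z * std_gauss_density z\<bar> + e s * (w z * std_gauss_density z))"
        using gi ewi by (intro Bochner_Integration.integrable_add integrable_abs)
      show "(\<lambda>z. f s z * std_gauss_density z) \<in> borel_measurable lborel"
        using fm[of s] by measurable
      show "AE z in lborel. norm (f s z * std_gauss_density z) \<le> norm (\<bar>g z * std_gauss_density z\<bar> + e s * (w z * std_gauss_density z))"
      proof (intro AE_I2)
        fix z
        have "norm (f s z * std_gauss_density z) \<le> \<bar>g z * std_gauss_density z\<bar> + e s * (w z * std_gauss_density z)"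
          using pw[of z] by simp
        then show "norm (f s z * std_gauss_density z) \<le> norm (\<bar>g z * std_gauss_density z\<bar> + e s * (w z * std_gauss_density z))"
          by simp
      qed
    qed
    have "(\<integral>z. f s z * std_gauss_density z \<partial>lborel) - (\<integral>z. g z * std_gauss_density z \<partial>lborel)
        = (\<integral>z. f s z * std_gauss_density z - g z * std_gauss_density z \<partial>lborel)"
      using fi gi by simp
    also have "\<bar>\<dots>\<bar> \<le> (\<integral>z. e s * (w z * std_gauss_density z) \<partial>lborel)"
      by (rule integral_abs_bound_integral) (use fi gi ewi pw in auto)
    also have "\<dots> = e s * ?c" by simp
    finally show ?case by simp
  qed
  have "((\<lambda>s. e s * ?c) \<longlongrightarrow> 0) at_top"
    using tendsto_mult_left_zero[OF e0] by simp
  from Lim_null_comparison[OF ev this] show ?thesis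
    by (simp add: Lim_null[symmetric])
qed

lemma risk_rewrite:
  "gauss_expect \<theta> s h / s\<^sup>2 = (\<integral>z. (h (\<theta> + s *\<^sub>R z) / s\<^sup>2) * std_gauss_density z \<partial>lborel)"
proof -
  have "(\<lambda>z. (h (\<theta> + s *\<^sub>R z) / s\<^sup>2) * std_gauss_density z) = (\<lambda>z. h (\<theta> + s *\<^sub>R z) * std_gauss_density z / s\<^sup>2)"
    by auto
  then show ?thesis unfolding gauss_expect_def by simp
qed

lemma inv_sq0: "((\<lambda>s::real. K / s\<^sup>2) \<longlongrightarrow> 0) at_top"
proof -
  have "filterlim (\<lambda>s::real. s^2) at_top at_top"
    by (rule filterlim_pow_at_top) (auto intro: filterlim_ident)
  then show ?thesis
    by (rule tendsto_divide_0[OF tendsto_const filterlim_at_top_imp_at_infinity])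
qed

lemma inv0: "((\<lambda>s::real. K / s) \<longlongrightarrow> 0) at_top"
  by (rule tendsto_divide_0[OF tendsto_const filterlim_at_top_imp_at_infinity[OF filterlim_ident]])

lemma proj_meas:
  assumes "convex C" "closed C" "C \<noteq> {}"
  shows "(\<lambda>z. (norm (closest_point C (\<theta> + s *\<^sub>R z) - u))\<^sup>2 / s\<^sup>2) \<in> borel_measurable borel"
proof -
  have "continuous_on UNIV (closest_point C)"
    by (rule continuous_on_closest_point) (use assms in auto)
  then have "continuous_on UNIV (\<lambda>z. closest_point C (\<theta> + s *\<^sub>R z))"
    by (rule continuous_on_compose2[of UNIV _ UNIV "\<lambda>z. \<theta> + s *\<^sub>R z"]) (auto intro!: continuous_intros)
  then have "continuous_on UNIV (\<lambda>z. (norm (closest_point C (\<theta> + s *\<^sub>R z) - u))\<^sup>2)"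
    by (intro continuous_intros)
  then have [measurable]: "(\<lambda>z. (norm (closest_point C (\<theta> + s *\<^sub>R z) - u))\<^sup>2) \<in> borel_measurable borel"
    by (rule borel_measurable_continuous_onI)
  show ?thesis by measurable
qed

lemma oproj_norm_le: "norm (oproj z) \<le> norm (z::real^'n)"
  using oproj_lip[of z 0] by (simp add: oproj_0)

lemma orth_bound:
  fixes \<theta> u z :: "real^'n"
  assumes u: "norm u \<le> norm \<theta>" and s: "max 1 (norm \<theta>) \<le> s"
  shows "\<bar>(norm (oproj (\<theta> + s *\<^sub>R z) - u))\<^sup>2 / s\<^sup>2 - (norm (oproj z))\<^sup>2\<bar> \<le> (norm \<theta> / s) * (4 * norm z + 4)"
proof -
  have s0: "0 < s" using s by simp
  define \<epsilon> where "\<epsilon> = norm \<theta> / s"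
  have e0: "0 \<le> \<epsilon>" and e1: "\<epsilon> \<le> 1" using s s0 by (auto simp: \<epsilon>_def field_simps)
  define A where "A = (1/s) *\<^sub>R (oproj (\<theta> + s *\<^sub>R z) - u)"
  have nA: "(norm (oproj (\<theta> + s *\<^sub>R z) - u))\<^sup>2 / s\<^sup>2 = (norm A)\<^sup>2"
    using s0 by (simp add: A_def power_divide)
  have sc: "(1/s) *\<^sub>R oproj (s *\<^sub>R z) = oproj z" using s0 by (simp add: oproj_scale)
  have "A - oproj z = (1/s) *\<^sub>R (oproj (\<theta> + s *\<^sub>R z) - oproj (s *\<^sub>R z)) - (1/s) *\<^sub>R u"
    unfolding A_def sc[symmetric] by (simp add: algebra_simps)
  then have "norm (A - oproj z) \<le> (1/s) * norm (oproj (\<theta> + s *\<^sub>R z) - oproj (s *\<^sub>R z)) + (1/s) * norm u"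
    using s0 norm_triangle_ineq4[of "(1/s) *\<^sub>R (oproj (\<theta> + s *\<^sub>R z) - oproj (s *\<^sub>R z))" "(1/s) *\<^sub>R u"]
    by simp
  also have "\<dots> \<le> (1/s) * norm \<theta> + (1/s) * norm \<theta>"
    using oproj_lip[of "\<theta> + s *\<^sub>R z" "s *\<^sub>R z"] u s0
    by (intro add_mono mult_left_mono) auto
  finally have d: "norm (A - oproj z) \<le> 2 * \<epsilon>" by (simp add: \<epsilon>_def)
  define a where "a = norm A"
  define b where "b = norm (oproj z)"
  have ab: "\<bar>a - b\<bar> \<le> 2 * \<epsilon>" using norm_triangle_ineq3[of A "oproj z"] d by (simp add: a_def b_def)
  have bz: "b \<le> norm z" by (simp add: b_def oproj_norm_le)
  have a0: "0 \<le> a" and b0: "0 \<le> b" by (auto simp: a_def b_def)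
  have "a\<^sup>2 - b\<^sup>2 = (a - b) * (a + b)" by (simp add: power2_eq_square algebra_simps)
  then have "\<bar>a\<^sup>2 - b\<^sup>2\<bar> = \<bar>a - b\<bar> * (a + b)" using a0 b0 by (simp add: abs_mult)
  also have "\<dots> \<le> (2 * \<epsilon>) * (2 * norm z + 2)"
  proof (rule mult_mono)
    show "a + b \<le> 2 * norm z + 2" using ab bz e1 by linarith
  qed (use ab a0 b0 e0 in auto)
  finally show ?thesis unfolding nA a_def[symmetric] b_def[symmetric] \<epsilon>_def[symmetric] by (simp add: algebra_simps)
qed

lemma orth_limit:
  fixes \<theta> u :: "real^'n"
  assumes u: "norm u \<le> norm \<theta>"
  shows "((\<lambda>s. \<integral>z. ((norm (oproj (\<theta> + s *\<^sub>R z) - u))\<^sup>2 / s\<^sup>2) * std_gauss_density z \<partial>lborel) \<longlongrightarrow> real CARD('n) / 2) at_top"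
proof -
  have gi: "integrable lborel (\<lambda>z::real^'n. (norm (oproj z))\<^sup>2 * std_gauss_density z)"
    and gv: "(\<integral>z. (norm (oproj z))\<^sup>2 * std_gauss_density (z::real^'n) \<partial>lborel) = real CARD('n) / 2"
    using gauss_oproj by (auto simp: has_bochner_integral_iff)
  have wi: "integrable lborel (\<lambda>z::real^'n. (4 * norm z + 4) * std_gauss_density z)"
  proof -
    have "integrable lborel (\<lambda>z::real^'n. 4 * (norm z * std_gauss_density z) + 4 * std_gauss_density z)"
      using gauss_norm_integrable gauss_total by (auto simp: has_bochner_integral_iff)
    then show ?thesis by (simp add: algebra_simps)
  qed
  have fm: "(\<lambda>z. (norm (oproj (\<theta> + s *\<^sub>R z) - u))\<^sup>2 / s\<^sup>2) \<in> borel_measurable borel" for s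
    using proj_meas[OF orthant_convex orthant_closed, of \<theta> s u] orthant_nonempty by (auto simp: oproj_eq)
  have "((\<lambda>s. \<integral>z. ((norm (oproj (\<theta> + s *\<^sub>R z) - u))\<^sup>2 / s\<^sup>2) * std_gauss_density z \<partial>lborel)
        \<longlongrightarrow> (\<integral>z. (norm (oproj z))\<^sup>2 * std_gauss_density (z::real^'n) \<partial>lborel)) at_top"
  proof (rule gauss_limit[OF fm _ inv0 wi gi])
    show "\<forall>\<^sub>F s in at_top. 0 \<le> norm \<theta> / s \<and> (\<forall>z. \<bar>(norm (oproj (\<theta> + s *\<^sub>R z) - u))\<^sup>2 / s\<^sup>2 - (norm (oproj z))\<^sup>2\<bar> \<le> norm \<theta> / s * (4 * norm z + 4))"
      using eventually_ge_at_top[of "max 1 (norm \<theta>)"]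
    proof eventually_elim
      case (elim s) then show ?case using orth_bound[OF u elim] by auto
    qed
  qed
  then show ?thesis by (simp add: gv)
qed

lemma zero_in_tangent: "\<theta> \<in> C \<Longrightarrow> 0 \<in> tangent_cone C \<theta>"
  unfolding tangent_cone_def
  by (rule subsetD[OF closure_subset]) (auto intro!: exI[of _ 0] exI[of _ \<theta>])

lemma core_bounded:
  fixes C :: "(real^'n) set"
  assumes ne: "C \<noteq> {}" and cl: "closed C" and bd: "bounded C"
  shows "core_cone C = {0}"
proof
  show "{0} \<subseteq> core_cone C" unfolding core_cone_def using zero_in_tangent by auto
  show "core_cone C \<subseteq> {0}"
  proof
    fix v assume v: "v \<in> core_cone C"
    have "compact C" using cl bd by (simp add: compact_eq_bounded_closed)
    moreover have "continuous_on C (\<lambda>x. v \<bullet> x)" by (intro continuous_intros)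
    ultimately obtain \<theta> where th: "\<theta> \<in> C" and mx: "\<forall>y\<in>C. v \<bullet> y \<le> v \<bullet> \<theta>"
      using continuous_attains_sup[of C "\<lambda>x. v \<bullet> x"] ne by auto
    have sub: "{\<alpha> *\<^sub>R (\<theta>' - \<theta>) | \<alpha> \<theta>'. \<alpha> \<ge> 0 \<and> \<theta>' \<in> C} \<subseteq> {x. v \<bullet> x \<le> 0}"
    proof
      fix x assume "x \<in> {\<alpha> *\<^sub>R (\<theta>' - \<theta>) | \<alpha> \<theta>'. \<alpha> \<ge> 0 \<and> \<theta>' \<in> C}"
      then obtain \<alpha> \<theta>' where x: "x = \<alpha> *\<^sub>R (\<theta>' - \<theta>)" and a: "\<alpha> \<ge> 0" and t: "\<theta>' \<in> C" by auto
      have "v \<bullet> x = \<alpha> * (v \<bullet> \<theta>' - v \<bullet> \<theta>)" by (simp add: x inner_diff_right)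
      also have "\<dots> \<le> 0" using a mx t by (simp add: mult_nonneg_nonpos)
      finally show "x \<in> {x. v \<bullet> x \<le> 0}" by simp
    qed
    have "tangent_cone C \<theta> \<subseteq> {x. v \<bullet> x \<le> 0}"
      unfolding tangent_cone_def by (rule closure_minimal[OF sub closed_halfspace_le])
    moreover have "v \<in> tangent_cone C \<theta>" using v th by (auto simp: core_cone_def)
    ultimately have "v \<bullet> v \<le> 0" by auto
    then have "v \<bullet> v = 0" using inner_ge_zero[of v] by linarith
    then show "v \<in> {0}" by simp
  qed
qed

lemma core_unbounded:
  fixes C :: "(real^'n) set"
  assumes nb: "\<not> bounded C"
  shows "\<exists>d. d \<noteq> 0 \<and> d \<in> core_cone C"
proof -
  have "\<forall>n::nat. \<exists>x\<in>C. real (Suc n) < norm x"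
    using nb unfolding bounded_iff by (meson not_le)
  then obtain x where xC: "\<And>n. x n \<in> C" and xn: "\<And>n. real (Suc n) < norm (x n)"
    by metis
  have xpos: "0 < norm (x n)" for n using xn[of n] by linarith
  define u where "u n = (1 / norm (x n)) *\<^sub>R x n" for n
  have us: "u n \<in> sphere 0 1" for n using xpos[of n] by (simp add: u_def)
  have sc: "seq_compact (sphere (0::real^'n) 1)" by (rule compact_imp_seq_compact[OF compact_sphere])
  obtain d r where d: "d \<in> sphere (0::real^'n) 1" and r: "strict_mono (r :: nat \<Rightarrow> nat)" and lim: "(u \<circ> r) \<longlonglongrightarrow> d"
    by (rule seq_compactE[OF sc allI[OF us]])
  have d0: "d \<noteq> 0" using d by auto
  have inv0: "(\<lambda>k. 1 / norm (x (r k))) \<longlonglongrightarrow> 0"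
  proof (rule Lim_null_comparison[OF _ LIMSEQ_inverse_real_of_nat])
    show "\<forall>\<^sub>F k in sequentially. norm (1 / norm (x (r k))) \<le> inverse (real (Suc k))"
    proof (intro always_eventually allI)
      fix k
      have "real (Suc k) \<le> real (Suc (r k))" using seq_suble[OF r, of k] by simp
      also have "\<dots> < norm (x (r k))" by (rule xn)
      finally show "norm (1 / norm (x (r k))) \<le> inverse (real (Suc k))"
        by (simp add: divide_inverse le_imp_inverse_le)
    qed
  qed
  have "d \<in> tangent_cone C \<theta>" if th: "\<theta> \<in> C" for \<theta>
    unfolding tangent_cone_def closure_sequential
  proof (intro exI conjI allI)
    let ?w = "\<lambda>k. (1 / norm (x (r k))) *\<^sub>R (x (r k) - \<theta>)"
    show "?w k \<in> {\<alpha> *\<^sub>R (\<theta>' - \<theta>) | \<alpha> \<theta>'. \<alpha> \<ge> 0 \<and> \<theta>' \<in> C}" for k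
      using xC[of "r k"] by (intro CollectI exI[of _ "1 / norm (x (r k))"] exI[of _ "x (r k)"]) auto
    have eq: "?w = (\<lambda>k. (u \<circ> r) k - (1 / norm (x (r k))) *\<^sub>R \<theta>)"
      by (auto simp: u_def algebra_simps)
    have "(\<lambda>k. (1 / norm (x (r k))) *\<^sub>R \<theta>) \<longlonglongrightarrow> 0 *\<^sub>R \<theta>"
      by (intro tendsto_scaleR inv0 tendsto_const)
    then show "?w \<longlonglongrightarrow> d" unfolding eq using tendsto_diff[OF lim] by force
  qed
  then show ?thesis using d0 by (auto simp: core_cone_def)
qed

lemma core_iff:
  fixes C :: "(real^'n) set"
  assumes "C \<noteq> {}" "closed C"
  shows "core_cone C = {0} \<longleftrightarrow> bounded C"
  using core_bounded[OF assms] core_unbounded[of C] by auto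

lemma bdd_limit:
  fixes C :: "(real^'n) set" and \<theta> u :: "real^'n"
  assumes cv: "convex C" "closed C" "C \<noteq> {}" and K: "\<And>y. norm (closest_point C y - u) \<le> K"
  shows "((\<lambda>s. \<integral>z. ((norm (closest_point C (\<theta> + s *\<^sub>R z) - u))\<^sup>2 / s\<^sup>2) * std_gauss_density z \<partial>lborel) \<longlongrightarrow> 0) at_top"
proof -
  have K0: "0 \<le> K" using K[of 0] norm_ge_zero order_trans by blast
  have wi: "integrable lborel (\<lambda>z::real^'n. 1 * std_gauss_density z)"
    using gauss_total by (auto simp: has_bochner_integral_iff)
  have gi: "integrable lborel (\<lambda>z::real^'n. 0 * std_gauss_density z)" by simp
  have "((\<lambda>s. \<integral>z. ((norm (closest_point C (\<theta> + s *\<^sub>R z) - u))\<^sup>2 / s\<^sup>2) * std_gauss_density z \<partial>lborel)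
      \<longlongrightarrow> (\<integral>z. 0 * std_gauss_density (z::real^'n) \<partial>lborel)) at_top"
  proof (rule gauss_limit[OF proj_meas[OF cv] _ inv_sq0 wi gi])
    show "\<forall>\<^sub>F s in at_top. 0 \<le> K\<^sup>2 / s\<^sup>2 \<and> (\<forall>z. \<bar>(norm (closest_point C (\<theta> + s *\<^sub>R z) - u))\<^sup>2 / s\<^sup>2 - 0\<bar> \<le> K\<^sup>2 / s\<^sup>2 * 1)"
    proof (intro always_eventually allI conjI)
      fix s z
      have "(norm (closest_point C (\<theta> + s *\<^sub>R z) - u))\<^sup>2 \<le> K\<^sup>2"
        by (rule power_mono[OF K norm_ge_zero])
      then show "\<bar>(norm (closest_point C (\<theta> + s *\<^sub>R z) - u))\<^sup>2 / s\<^sup>2 - 0\<bar> \<le> K\<^sup>2 / s\<^sup>2 * 1"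
        by (simp add: divide_right_mono)
    qed simp
  qed
  then show ?thesis by simp
qed

theorem corollary3:
  fixes \<theta>s :: "real ^ 'n"
  shows "((\<lambda>\<sigma>. misspec_risk nonneg_orthant \<theta>s \<sigma> / \<sigma>\<^sup>2) \<longlongrightarrow> real CARD('n) / 2) at_top
       \<and> ((\<lambda>\<sigma>. excess_risk nonneg_orthant \<theta>s \<sigma> / \<sigma>\<^sup>2) \<longlongrightarrow> real CARD('n) / 2) at_top
       \<and> (\<forall>C :: (real ^ 'n) set. C \<noteq> {} \<and> closed C \<and> convex C \<longrightarrow>
            (core_cone C = {0} \<longleftrightarrow> bounded C)
          \<and> (bounded C \<longrightarrow>
               ((\<lambda>\<sigma>. misspec_risk C \<theta>s \<sigma> / \<sigma>\<^sup>2) \<longlongrightarrow> 0) at_top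
             \<and> ((\<lambda>\<sigma>. excess_risk C \<theta>s \<sigma> / \<sigma>\<^sup>2) \<longlongrightarrow> 0) at_top))"
proof (intro conjI allI impI)
  have eq: "(\<lambda>\<sigma>. misspec_risk nonneg_orthant \<theta>s \<sigma> / \<sigma>\<^sup>2)
      = (\<lambda>s. \<integral>z. ((norm (oproj (\<theta>s + s *\<^sub>R z) - oproj \<theta>s))\<^sup>2 / s\<^sup>2) * std_gauss_density z \<partial>lborel)"
    by (simp add: misspec_risk_def risk_rewrite oproj_eq)
  show "((\<lambda>\<sigma>. misspec_risk nonneg_orthant \<theta>s \<sigma> / \<sigma>\<^sup>2) \<longlongrightarrow> real CARD('n) / 2) at_top"
    unfolding eq by (rule orth_limit) (rule oproj_norm_le)
next
  have eq: "(\<lambda>\<sigma>. excess_risk nonneg_orthant \<theta>s \<sigma> / \<sigma>\<^sup>2)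
      = (\<lambda>s. (\<integral>z. ((norm (oproj (\<theta>s + s *\<^sub>R z) - \<theta>s))\<^sup>2 / s\<^sup>2) * std_gauss_density z \<partial>lborel)
             - (norm (oproj \<theta>s - \<theta>s))\<^sup>2 / s\<^sup>2)"
    by (simp add: excess_risk_def diff_divide_distrib risk_rewrite oproj_eq)
  show "((\<lambda>\<sigma>. excess_risk nonneg_orthant \<theta>s \<sigma> / \<sigma>\<^sup>2) \<longlongrightarrow> real CARD('n) / 2) at_top"
    unfolding eq using tendsto_diff[OF orth_limit[OF order_refl] inv_sq0] by simp
next
  fix C :: "(real^'n) set"
  assume h: "C \<noteq> {} \<and> closed C \<and> convex C"
  then have ne: "C \<noteq> {}" and cl: "closed C" and cv: "convex C" by auto
  show "core_cone C = {0} \<longleftrightarrow> bounded C" by (rule core_iff[OF ne cl])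
  assume bd: "bounded C"
  then obtain B where B: "\<And>x. x \<in> C \<Longrightarrow> norm x \<le> B" unfolding bounded_iff by auto
  have inC: "closest_point C y \<in> C" for y by (rule closest_point_in_set[OF cl ne])
  have K1: "norm (closest_point C y - closest_point C \<theta>s) \<le> B + B" for y
    using norm_triangle_ineq4[of "closest_point C y" "closest_point C \<theta>s"] B[OF inC[of y]] B[OF inC[of \<theta>s]]
    by linarith
  have K2: "norm (closest_point C y - \<theta>s) \<le> B + norm \<theta>s" for y
    using norm_triangle_ineq4[of "closest_point C y" "\<theta>s"] B[OF inC[of y]] by linarith
  have eq1: "(\<lambda>\<sigma>. misspec_risk C \<theta>s \<sigma> / \<sigma>\<^sup>2)
      = (\<lambda>s. \<integral>z. ((norm (closest_point C (\<theta>s + s *\<^sub>R z) - closest_point C \<theta>s))\<^sup>2 / s\<^sup>2) * std_gauss_density z \<partial>lborel)"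
    by (simp add: misspec_risk_def risk_rewrite)
  show "((\<lambda>\<sigma>. misspec_risk C \<theta>s \<sigma> / \<sigma>\<^sup>2) \<longlongrightarrow> 0) at_top"
    unfolding eq1 by (rule bdd_limit[OF cv cl ne K1])
  have eq2: "(\<lambda>\<sigma>. excess_risk C \<theta>s \<sigma> / \<sigma>\<^sup>2)
      = (\<lambda>s. (\<integral>z. ((norm (closest_point C (\<theta>s + s *\<^sub>R z) - \<theta>s))\<^sup>2 / s\<^sup>2) * std_gauss_density z \<partial>lborel)
             - (norm (closest_point C \<theta>s - \<theta>s))\<^sup>2 / s\<^sup>2)"
    by (simp add: excess_risk_def diff_divide_distrib risk_rewrite)
  show "((\<lambda>\<sigma>. excess_risk C \<theta>s \<sigma> / \<sigma>\<^sup>2) \<longlongrightarrow> 0) at_top"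
    unfolding eq2 using tendsto_diff[OF bdd_limit[OF cv cl ne K2] inv_sq0] by simp
qed


end
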